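(* Let $\tilde Q\subseteq\mathfrak P$ be an independent set, let $\tilde S\subseteq\mathfrak P$, let $(a,b)$ with $a,b\in\mathcal G(\tilde Q)$ be a conjugal pair in relation to $\tilde S$, and let $o$ be a Pauli operator with $o\in G_{\tilde Q}(a)\cup G_{\tilde Q}(b)$. Then there exists a pair $(c,d)$ such that (1) $c,d\in\mathcal G(\tilde Q)$; (2) $o\in G_{\tilde Q}(c)$; (3) $o\notin G_{\tilde Q}(d)$; (4) $(c,d)$ is a conjugal pair in relation to $(\tilde S\setminus\{a,b\})\cup\{c,d\}$; and (5) $\mathcal G(\{c,d\})=\mathcal G(\{a,b\})$.
   Context: $\mathfrak P$ is the group of $N$-qubit Pauli operators modulo phases; $\mathcal G(T)$ is the set of all products of elements of $T$. A set is independent if no element is a product of other elements of the set. For an independent set $\tilde Q$ and $q\in\mathcal G(\tilde Q)$, $G_{\tilde Q}(q)\subseteq\tilde Q$ is the unique subset whose product equals $q$. A pair $(a,b)$ is a conjugal pair in relation to a set $X$ if each of $a,b$ commutes with every operator in $X$ except its partner (the other member of the pair), should the partner lie in $X$. *)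

theory Defs
  imports Main "HOL-Library.Function_Algebras"
begin

text \<open>Single-qubit Pauli operators modulo phases, with the multiplication table
  of the Pauli group modulo phases (identity, X, Y, Z).\<close>

datatype pauli1 = PI | PX | PY | PZ

fun mult1 :: "pauli1 \<Rightarrow> pauli1 \<Rightarrow> pauli1" where
  "mult1 PI q = q"
| "mult1 p PI = p"
| "mult1 PX PX = PI" | "mult1 PY PY = PI" | "mult1 PZ PZ = PI"
| "mult1 PX PY = PZ" | "mult1 PY PX = PZ"
| "mult1 PX PZ = PY" | "mult1 PZ PX = PY"
| "mult1 PY PZ = PX" | "mult1 PZ PY = PX"

instantiation pauli1 :: comm_monoid_mult
begin
definition one_pauli1_def: "1 = PI"
definition times_pauli1_def: "p * q = mult1 p q"
instance
proof
  fix a b c :: pauli1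
  show "a * b * c = a * (b * c)" unfolding times_pauli1_def
    by (cases a; cases b; cases c) simp_all
  show "a * b = b * a" unfolding times_pauli1_def
    by (cases a; cases b) simp_all
  show "1 * a = a" unfolding times_pauli1_def one_pauli1_def by simp
qed
end

definition anticomm1 :: "pauli1 \<Rightarrow> pauli1 \<Rightarrow> bool" where
  "anticomm1 p q \<longleftrightarrow> p \<noteq> PI \<and> q \<noteq> PI \<and> p \<noteq> q"

text \<open>An N-qubit Pauli operator modulo phases: a function from qubit indices to
  single-qubit Paulis, equal to the identity outside the qubits 0..N-1.
  The product is pointwise (instance from Function_Algebras).\<close>
type_synonym pauli = "nat \<Rightarrow> pauli1"

definition pauli_ops :: "nat \<Rightarrow> pauli set" where
  "pauli_ops N = {p. \<forall>i\<ge>N. p i = PI}"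

definition commutes :: "nat \<Rightarrow> pauli \<Rightarrow> pauli \<Rightarrow> bool" where
  "commutes N p q \<longleftrightarrow> even (card {i. i < N \<and> anticomm1 (p i) (q i)})"

definition gen :: "pauli set \<Rightarrow> pauli set" where
  "gen T = {\<Prod>F | F. finite F \<and> F \<subseteq> T}"

definition independent :: "pauli set \<Rightarrow> bool" where
  "independent T \<longleftrightarrow> (\<forall>t\<in>T. t \<notin> gen (T - {t}))"

definition decomp :: "pauli set \<Rightarrow> pauli \<Rightarrow> pauli set" where
  "decomp Q q = (THE F. finite F \<and> F \<subseteq> Q \<and> \<Prod>F = q)"

definition conjugal :: "nat \<Rightarrow> pauli \<Rightarrow> pauli \<Rightarrow> pauli set \<Rightarrow> bool" where
  "conjugal N a b X \<longleftrightarrow> (\<forall>x\<in>X. x \<noteq> b \<longrightarrow> commutes N a x) \<and> (\<forall>x\<in>X. x \<noteq> a \<longrightarrow> commutes N b x)"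

end

theory Submission
  imports Defs
begin

lemma pauli_sq: "(x::pauli) * x = 1"
proof
  fix i show "(x * x) i = (1::pauli) i"
    by (cases "x i") (simp_all add: times_fun_def one_fun_def times_pauli1_def one_pauli1_def)
qed

lemma prod_sq: "prod (f::'a \<Rightarrow> pauli) A * prod f A = 1"
  by (simp add: prod.distrib[symmetric] pauli_sq)

lemma prod_symdiff:
  assumes "finite F" "finite G"
  shows "\<Prod>F * \<Prod>G = (\<Prod>((F - G) \<union> (G - F)) :: pauli)"
proof -
  have f: "\<Prod>F = \<Prod>(F - G) * (\<Prod>(F \<inter> G) :: pauli)"
    using assms prod.subset_diff[of "F \<inter> G" F "\<lambda>x. x"] by (simp add: Diff_Int2 inf.commute Diff_Int)
  have g: "\<Prod>G = \<Prod>(G - F) * (\<Prod>(F \<inter> G) :: pauli)"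
    using assms prod.subset_diff[of "F \<inter> G" G "\<lambda>x. x"] by (simp add: Diff_Int2 Diff_Int)
  have u: "\<Prod>((F - G) \<union> (G - F)) = \<Prod>(F - G) * (\<Prod>(G - F) :: pauli)"
    using assms by (subst prod.union_disjoint) auto
  have "\<Prod>F * \<Prod>G = \<Prod>(F - G) * \<Prod>(G - F) * (\<Prod>(F \<inter> G) * (\<Prod>(F \<inter> G) :: pauli))"
    unfolding f g by (simp add: ac_simps)
  also have "\<dots> = \<Prod>((F - G) \<union> (G - F))" by (simp add: prod_sq[of "\<lambda>x. x"] u)
  finally show ?thesis .
qed

lemma indep_unique:
  assumes ind: "independent Q" and "finite F" "F \<subseteq> Q" "finite G" "G \<subseteq> Q"
    and eq: "\<Prod>F = (\<Prod>G :: pauli)"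
  shows "F = G"
proof (rule ccontr)
  assume "F \<noteq> G"
  define H where "H = (F - G) \<union> (G - F)"
  then obtain t where t: "t \<in> H" using \<open>F \<noteq> G\<close> by blast
  have fH: "finite H" "H \<subseteq> Q" using assms unfolding H_def by auto
  have "\<Prod>H = (1::pauli)" using prod_symdiff[OF assms(2,4)] eq pauli_sq unfolding H_def by metis
  moreover have "\<Prod>H = t * \<Prod>(H - {t})" using fH t by (simp add: prod.remove)
  ultimately have "t * \<Prod>(H - {t}) = 1" by simp
  hence "t * \<Prod>(H - {t}) * \<Prod>(H - {t}) = \<Prod>(H - {t})" by simp
  hence "t = \<Prod>(H - {t})" by (simp add: mult.assoc prod_sq[of "\<lambda>x. x"])
  moreover have "\<Prod>(H - {t}) \<in> gen (Q - {t})" unfolding gen_def using fH by blast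
  ultimately show False using ind t fH unfolding independent_def by auto
qed

lemma decomp_eq:
  assumes "independent Q" "finite F" "F \<subseteq> Q"
  shows "decomp Q (\<Prod>F) = F"
  unfolding decomp_def
proof (rule the_equality)
  show "finite F \<and> F \<subseteq> Q \<and> \<Prod>F = \<Prod>F" using assms by simp
next
  fix G assume "finite G \<and> G \<subseteq> Q \<and> \<Prod>G = \<Prod>F"
  thus "G = F" using indep_unique[OF assms(1) _ _ assms(2,3)] by blast
qed

lemma anticomm_mult: "anticomm1 (p * q) r = (anticomm1 p r \<noteq> anticomm1 q r)"
  by (cases p; cases q; cases r) (simp_all add: anticomm1_def times_pauli1_def)

lemma commutes_self: "commutes N x x"
  unfolding commutes_def anticomm1_def by simp

lemma card_xor:
  "card {i. i < (N::nat) \<and> (A i \<noteq> B i)} + 2 * card {i. i < N \<and> A i \<and> B i}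
   = card {i. i < N \<and> A i} + card {i. i < N \<and> B i}"
proof -
  let ?A = "{i. i < N \<and> A i}" and ?B = "{i. i < N \<and> B i}"
  have fin1: "finite ?A" by simp
  have fin2: "finite ?B" by simp
  note fin = fin1 fin2
  have x: "{i. i < N \<and> (A i \<noteq> B i)} = (?A - ?B) \<union> (?B - ?A)" by auto
  have i: "{i. i < N \<and> A i \<and> B i} = ?A \<inter> ?B" by auto
  have c1: "card ((?A - ?B) \<union> (?B - ?A)) = card (?A - ?B) + card (?B - ?A)"
    by (rule card_Un_disjoint) auto
  have c2: "card ?A = card (?A - ?B) + card (?A \<inter> ?B)"
    using fin1 card_Int_Diff[of ?A ?B] by simp
  have c3: "card ?B = card (?B - ?A) + card (?A \<inter> ?B)"
    using fin2 card_Int_Diff[of ?B ?A] by (simp add: Int_commute)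
  show ?thesis unfolding x i c1 using c2 c3 by simp
qed

lemma commutes_mult:
  assumes "commutes N a x" "commutes N b x"
  shows "commutes N (a * b) x"
proof -
  have e: "{i. i < N \<and> anticomm1 ((a * b) i) (x i)} =
      {i. i < N \<and> (anticomm1 (a i) (x i) \<noteq> anticomm1 (b i) (x i))}"
    by (simp add: times_fun_def anticomm_mult)
  have par: "\<And>u v w z::nat. even u \<Longrightarrow> even v \<Longrightarrow> w + 2 * z = u + v \<Longrightarrow> even w" by presburger
  show ?thesis using assms card_xor[of N "\<lambda>i. anticomm1 (a i) (x i)" "\<lambda>i. anticomm1 (b i) (x i)"]
    unfolding commutes_def e by (blast intro: par)
qed

lemma gen2: "gen {x, y} = {1, x, y, x * (y::pauli)}"
proof
  show "gen {x, y} \<subseteq> {1, x, y, x * y}"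
  proof
    fix z assume "z \<in> gen {x, y}"
    then obtain F where F: "F \<subseteq> {x, y}" "z = \<Prod>F" unfolding gen_def by auto
    have "F = {} \<or> F = {x} \<or> F = {y} \<or> F = {x, y}" using F by blast
    thus "z \<in> {1, x, y, x * y}"
    proof (elim disjE)
      assume "F = {x, y}" thus ?thesis using F by (cases "x = y") simp_all
    qed (use F in simp_all)
  qed
next
  have a: "\<Prod>{x, y} \<in> gen {x,y}" "\<Prod>{x} \<in> gen {x,y}" "\<Prod>{y} \<in> gen {x,y}" "\<Prod>{} \<in> gen {x,y}"
    unfolding gen_def by blast+
  have "x * y \<in> gen {x, y}"
  proof (cases "x = y")
    case True thus ?thesis using a(4) by (simp add: pauli_sq)
  next
    case False thus ?thesis using a(1) by simp
  qed
  thus "{1, x, y, x * y} \<subseteq> gen {x, y}" using a by auto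
qed

lemma gen_mult: "gen {a, a * b} = gen {a, b::pauli}"
proof -
  have "a * (a * b) = b" by (simp add: mult.assoc[symmetric] pauli_sq)
  thus ?thesis unfolding gen2 by auto
qed

lemma main_case:
  assumes ind: "independent Q"
    and ga: "a \<in> gen Q" and gb: "b \<in> gen Q"
    and cj: "conjugal N a b S"
    and pa: "p \<in> decomp Q a"
  shows "\<exists>c d. c \<in> gen Q \<and> d \<in> gen Q \<and> p \<in> decomp Q c \<and> p \<notin> decomp Q d
           \<and> conjugal N c d ((S - {a, b}) \<union> {c, d}) \<and> gen {c, d} = gen {a, b}"
proof (cases "p \<in> decomp Q b")
  case False
  have "conjugal N a b ((S - {a, b}) \<union> {a, b})"
    using cj commutes_self unfolding conjugal_def by auto
  thus ?thesis using ga gb pa False by blast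
next
  case True
  obtain F where F: "finite F" "F \<subseteq> Q" "a = \<Prod>F" using ga unfolding gen_def by auto
  obtain G where G: "finite G" "G \<subseteq> Q" "b = \<Prod>G" using gb unfolding gen_def by auto
  have ab: "a * b = \<Prod>((F - G) \<union> (G - F))" using F G prod_symdiff by simp
  have gab: "a * b \<in> gen Q" unfolding ab gen_def using F G by blast
  have dab: "decomp Q (a * b) = (F - G) \<union> (G - F)"
    unfolding ab by (rule decomp_eq) (use ind F G in auto)
  have "decomp Q a = F" "decomp Q b = G" using decomp_eq ind F G by auto
  hence np: "p \<notin> decomp Q (a * b)" using pa True dab by auto
  have "conjugal N a (a * b) ((S - {a, b}) \<union> {a, a * b})"
    using cj commutes_self commutes_mult unfolding conjugal_def by auto
  thus ?thesis using ga gab pa np gen_mult by blast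
qed

theorem lemma4:
  fixes N :: nat and Q S :: "pauli set" and a b p :: pauli
  assumes "Q \<subseteq> pauli_ops N" and "independent Q"
    and "S \<subseteq> pauli_ops N"
    and "a \<in> gen Q" and "b \<in> gen Q"
    and "conjugal N a b S"
    and "p \<in> pauli_ops N"
    and "p \<in> decomp Q a \<union> decomp Q b"
  shows "\<exists>c d. c \<in> gen Q \<and> d \<in> gen Q \<and> p \<in> decomp Q c \<and> p \<notin> decomp Q d
           \<and> conjugal N c d ((S - {a, b}) \<union> {c, d}) \<and> gen {c, d} = gen {a, b}"
proof (cases "p \<in> decomp Q a")
  case True
  thus ?thesis using main_case assms by blast
next
  case False
  hence pb: "p \<in> decomp Q b" using assms by blast
  have cj: "conjugal N b a S" using assms(6) unfolding conjugal_def by auto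
  have "{b, a} = {a, b}" by auto
  thus ?thesis using main_case[OF assms(2,5,4) cj pb] by metis
qed

end
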